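(* Consider an MWSBP instance with $s_i=w_i$ for all $i$, and let $W_1\ge W_2\ge\cdots\ge W_p$ be the weights of the bins output by WFFI-R. If $p\ge 2$ and $W_{p-1}>\frac23$, then the cost of the WFFI-R output is at most $\frac32\cdot\mathtt{OPT}$.
   Context: Min-Weighted Sum Bin Packing (MWSBP): an instance consists of $n$ items with sizes $s_i\in(0,1]$ and weights $w_i>0$. A feasible solution is a partition of $[n]$ into bins $B_1,\ldots,B_p$ with $\sum_{i\in B_k}s_i\le 1$; its cost is $\sum_{k=1}^p k\sum_{i\in B_k}w_i$; $\mathtt{OPT}$ is the minimum cost. The WFFI-R algorithm: sort the items in nondecreasing order of $s_i/w_i$ (ties broken arbitrarily); process them with First-Fit, i.e., put each item into the earliest-opened bin in which it still fits, opening a new bin if it fits in none; finally, reorder the bins in nonincreasing order of total weight. Its cost is $\sum_{k=1}^p k W_k$. *)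

theory Defs
  imports Complex_Main
begin

definition bin_load :: "(nat \<Rightarrow> real) \<Rightarrow> nat list \<Rightarrow> real" where
  "bin_load f b = sum_list (map f b)"

text \<open>First-Fit insertion of item i into the list of currently open bins
 (in order of opening).\<close>
fun ff_insert :: "(nat \<Rightarrow> real) \<Rightarrow> nat \<Rightarrow> nat list list \<Rightarrow> nat list list" where
  "ff_insert s i [] = [[i]]"
| "ff_insert s i (b # bs) =
     (if bin_load s b + s i \<le> 1 then (b @ [i]) # bs else b # ff_insert s i bs)"

definition first_fit :: "(nat \<Rightarrow> real) \<Rightarrow> nat list \<Rightarrow> nat list list" where
  "first_fit s xs = fold (ff_insert s) xs []"

definition wffi_order :: "nat \<Rightarrow> (nat \<Rightarrow> real) \<Rightarrow> (nat \<Rightarrow> real) \<Rightarrow> nat list \<Rightarrow> bool" where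
  "wffi_order n s w xs \<longleftrightarrow> distinct xs \<and> set xs = {0..<n} \<and>
     sorted_wrt (\<lambda>i j. s i / w i \<le> s j / w j) xs"

definition wffi_bins :: "(nat \<Rightarrow> real) \<Rightarrow> (nat \<Rightarrow> real) \<Rightarrow> nat list \<Rightarrow> nat list list" where
  "wffi_bins s w xs = sort_key (\<lambda>b. - bin_load w b) (first_fit s xs)"

definition sol_cost :: "(nat \<Rightarrow> real) \<Rightarrow> nat set list \<Rightarrow> real" where
  "sol_cost w B = (\<Sum>k<length B. real (k + 1) * (\<Sum>i\<in>B ! k. w i))"

definition feasible :: "nat \<Rightarrow> (nat \<Rightarrow> real) \<Rightarrow> nat set list \<Rightarrow> bool" where
  "feasible n s B \<longleftrightarrow>
     (\<forall>k<length B. B ! k \<noteq> {} \<and> (\<Sum>i\<in>B ! k. s i) \<le> 1) \<and>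
     (\<forall>k<length B. \<forall>l<length B. k \<noteq> l \<longrightarrow> B ! k \<inter> B ! l = {}) \<and>
     \<Union> (set B) = {0..<n}"

definition OPT :: "nat \<Rightarrow> (nat \<Rightarrow> real) \<Rightarrow> (nat \<Rightarrow> real) \<Rightarrow> real" where
  "OPT n s w = Inf {sol_cost w B | B. feasible n s B}"

end

theory Submission
  imports Defs "HOL-Library.Multiset"
begin

lemma ff_insert_mset: "mset (concat (ff_insert s i bs)) = mset (concat bs) + {#i#}"
  by (induction bs) auto

lemma fold_ff_mset: "mset (concat (fold (ff_insert s) xs bs)) = mset (concat bs) + mset xs"
  by (induction xs arbitrary: bs) (auto simp: ff_insert_mset)

lemma sum_list_mset_eq: "mset xs = mset ys \<Longrightarrow> sum_list (map (f::_\<Rightarrow>'b::comm_monoid_add) xs) = sum_list (map f ys)"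
  by (metis mset_map sum_mset_sum_list)

lemma concat_perm: "mset (concat (sort_key f L)) = mset (concat L)"
  unfolding mset_concat by (rule sum_list_mset_eq) (simp add: mset_sort)

lemma sum_list_concat_map: "sum_list (map f (concat xss)) = sum_list (map (\<lambda>b. sum_list (map f b)) xss)"
  by (induction xss) auto

lemma lb_aux:
  fixes V :: "nat \<Rightarrow> real"
  assumes "\<forall>k<m. 0 \<le> V k \<and> V k \<le> 1"
  shows "(\<Sum>k<m. V k) * ((\<Sum>k<m. V k) + 1) / 2 \<le> (\<Sum>k<m. real (k+1) * V k)
         \<and> (\<Sum>k<m. V k) \<le> real m"
  using assms
proof (induction m)
  case 0 then show ?case by simp
next
  case (Suc m)
  define S where "S = (\<Sum>k<m. V k)"
  define v where "v = V m"
  have IH: "S * (S+1)/2 \<le> (\<Sum>k<m. real (k+1) * V k)" "S \<le> real m"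
    using Suc by (auto simp: S_def)
  have v: "0 \<le> v" "v \<le> 1" using Suc.prems by (auto simp: v_def)
  have "(S+v)*(S+v+1)/2 = S*(S+1)/2 + S*v + v*(v+1)/2" by (simp add: field_simps)
  also have "\<dots> \<le> S*(S+1)/2 + real (m+1) * v"
  proof -
    have "S*v \<le> real m * v" using IH(2) v by (simp add: mult_right_mono)
    moreover have "v*v \<le> v*1" using v by (intro mult_left_mono) auto
    hence "v*(v+1)/2 \<le> v" by (simp add: field_simps)
    moreover have "real (m+1) * v = real m * v + v" by (simp add: algebra_simps)
    ultimately show ?thesis by linarith
  qed
  finally show ?case using IH v by (simp add: S_def[symmetric] v_def[symmetric])
qed

lemma ub_aux:
  fixes V :: "nat \<Rightarrow> real"
  assumes "\<forall>k<q. 2/3 < V k"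
  shows "(\<Sum>k<q. real (k+1) * V k) \<le> 3/4 * (\<Sum>k<q. V k) * ((\<Sum>k<q. V k) + 1) - (\<Sum>k<q. V k)/4
         \<and> 2/3 * real q \<le> (\<Sum>k<q. V k)"
  using assms
proof (induction q)
  case 0 then show ?case by simp
next
  case (Suc q)
  define S where "S = (\<Sum>k<q. V k)"
  define v where "v = V q"
  have IH: "(\<Sum>k<q. real (k+1) * V k) \<le> 3/4 * S * (S+1) - S/4" "2/3 * real q \<le> S"
    using Suc by (auto simp: S_def)
  have v: "2/3 < v" using Suc.prems by (auto simp: v_def)
  have "2/3 * real q * v \<le> S * v" using IH(2) v by (intro mult_right_mono) auto
  hence a: "real q * v \<le> 3/2 * S * v" by simp
  have "2/3 * v \<le> v * v" using v by (intro mult_right_mono) auto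
  hence b: "v \<le> 3/4*v*v + v/2" by simp
  have "(\<Sum>k<Suc q. real (k+1) * V k) = (\<Sum>k<q. real (k+1) * V k) + (real q + 1) * v"
    by (simp add: v_def)
  also have "\<dots> \<le> 3/4 * (S+v) * ((S+v) + 1) - (S+v)/4"
  proof -
    have e: "3/4 * (S+v) * ((S+v) + 1) - (S+v)/4 = (3/4 * S * (S+1) - S/4) + (3/2*S*v + 3/4*v*v + v/2)"
      by (simp add: field_simps)
    have f: "(real q + 1) * v = real q * v + v" by (simp add: algebra_simps)
    show ?thesis using e f IH(1) a b by linarith
  qed
  finally show ?case using IH v by (simp add: S_def[symmetric] v_def[symmetric])
qed

lemma ub_main:
  fixes V :: "nat \<Rightarrow> real"
  assumes "2 \<le> p" "\<forall>k<p-1. 2/3 < V k" "0 \<le> V (p-1)"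
  shows "(\<Sum>k<p. real (k+1) * V k) \<le> 3/2 * ((\<Sum>k<p. V k) * ((\<Sum>k<p. V k) + 1) / 2)"
proof -
  obtain q where q: "p = Suc q" "1 \<le> q" using assms(1) by (cases p) auto
  define S where "S = (\<Sum>k<q. V k)"
  define v where "v = V q"
  have IH: "(\<Sum>k<q. real (k+1) * V k) \<le> 3/4 * S * (S+1) - S/4" "2/3 * real q \<le> S"
    using ub_aux[of q V] assms(2) q by (auto simp: S_def)
  have v: "0 \<le> v" using assms(3) q by (simp add: v_def)
  have S: "2/3 \<le> S" using IH(2) q(2) by simp
  have "2/3 * real q * v \<le> S * v" using IH(2) v by (intro mult_right_mono) auto
  hence a: "real q * v \<le> 3/2 * S * v" by simp
  have "0 \<le> (v-1/6)^2" by simp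
  moreover have "(v-1/6)^2 = v*v - v/3 + 1/36" by (simp add: power2_eq_square field_simps)
  ultimately have b: "v \<le> 3/4*v*v + 3/4*v + S/4" using S by linarith
  have "(\<Sum>k<p. real (k+1) * V k) = (\<Sum>k<q. real (k+1) * V k) + (real q + 1) * v"
    by (simp add: v_def q)
  also have "\<dots> \<le> 3/4 * (S+v) * ((S+v) + 1)"
  proof -
    have e: "3/4 * (S+v) * ((S+v) + 1) = (3/4 * S * (S+1) - S/4) + (3/2*S*v + 3/4*v*v + 3/4*v + S/4)"
      by (simp add: field_simps)
    have f: "(real q + 1) * v = real q * v + v" by (simp add: algebra_simps)
    show ?thesis using e f IH(1) a b by linarith
  qed
  finally have L: "(\<Sum>k<p. real (k+1) * V k) \<le> 3/4 * (S+v) * ((S+v) + 1)" .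
  have T: "(\<Sum>k<p. V k) = S + v" by (simp add: q S_def v_def)
  have "3/4 * (S+v) * ((S+v) + 1) = 3/2 * ((S+v) * ((S+v) + 1) / 2)" by simp
  thus ?thesis using L unfolding T by linarith
qed

theorem claim1:
  fixes n :: nat and s w :: "nat \<Rightarrow> real" and xs :: "nat list"
  assumes sizes: "\<forall>i<n. 0 < s i \<and> s i \<le> 1"
    and weights: "\<forall>i<n. 0 < w i"
    and eq: "\<forall>i<n. s i = w i"
    and ord: "wffi_order n s w xs"
    and p2: "length (wffi_bins s w xs) \<ge> 2"
    and big: "bin_load w (wffi_bins s w xs ! (length (wffi_bins s w xs) - 2)) > 2/3"
  shows "sol_cost w (map set (wffi_bins s w xs)) \<le> 3/2 * OPT n s w"
proof -
  define bins where "bins = wffi_bins s w xs"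
  define p where "p = length bins"
  define W where "W = (\<Sum>i\<in>{0..<n}. w i)"
  define V where "V k = bin_load w (bins ! k)" for k
  have dxs: "distinct xs" and sxs: "set xs = {0..<n}" using ord by (auto simp: wffi_order_def)
  have ms: "mset (concat bins) = mset xs"
    unfolding bins_def wffi_bins_def first_fit_def
    by (simp add: concat_perm fold_ff_mset)
  have dc: "distinct (concat bins)" using ms dxs mset_eq_imp_distinct_iff by blast
  have sc: "set (concat bins) = {0..<n}" using ms sxs by (metis set_mset_mset)
  have dbin: "\<And>k. k < p \<Longrightarrow> distinct (bins ! k)"
    using dc by (auto simp: p_def distinct_concat_iff)
  have sbin: "\<And>k. k < p \<Longrightarrow> set (bins ! k) \<subseteq> {0..<n}"
    using sc by (auto simp: p_def)
  have Wsum: "(\<Sum>k<p. V k) = W"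
  proof -
    have "(\<Sum>k<p. V k) = sum_list (map (bin_load w) bins)"
      by (simp add: V_def p_def sum_list_sum_nth atLeast0LessThan)
    also have "\<dots> = sum_list (map w (concat bins))"
      by (simp add: sum_list_concat_map bin_load_def[abs_def] o_def)
    also have "\<dots> = sum_list (map w xs)" by (rule sum_list_mset_eq[OF ms])
    also have "\<dots> = W" using dxs sxs by (simp add: W_def sum_list_distinct_conv_sum_set)
    finally show ?thesis .
  qed
  have cost: "sol_cost w (map set bins) = (\<Sum>k<p. real (k+1) * V k)"
    unfolding sol_cost_def V_def bin_load_def p_def
    by (rule sum.cong) (auto simp: sum_list_distinct_conv_sum_set dbin[unfolded p_def])
  have sorted: "sorted (map (\<lambda>b. - bin_load w b) bins)"
    by (simp add: bins_def wffi_bins_def sorted_sort_key)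
  have Vbig: "\<forall>k<p-1. 2/3 < V k"
  proof (intro allI impI)
    fix k assume k: "k < p - 1"
    hence "k \<le> p - 2" by simp
    hence "(map (\<lambda>b. - bin_load w b) bins) ! k \<le> (map (\<lambda>b. - bin_load w b) bins) ! (p-2)"
      using sorted p2 by (intro sorted_nth_mono) (auto simp: p_def bins_def)
    hence "V (p-2) \<le> V k" using k p2 by (simp add: V_def p_def bins_def)
    thus "2/3 < V k" using big by (simp add: V_def p_def bins_def)
  qed
  have Vlast: "0 \<le> V (p-1)"
  proof -
    have "p - 1 < p" using p2 by (simp add: p_def bins_def)
    hence "set (bins ! (p-1)) \<subseteq> {0..<n}" by (rule sbin)
    thus ?thesis unfolding V_def bin_load_def
      using weights by (intro sum_list_nonneg) (fastforce intro: less_imp_le)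
  qed
  have alg: "sol_cost w (map set bins) \<le> 3/2 * (W * (W+1)/2)"
    using ub_main[of p V] p2 Vbig Vlast cost Wsum by (simp add: p_def bins_def)
  have opt: "W * (W+1)/2 \<le> OPT n s w"
    unfolding OPT_def
  proof (rule cInf_greatest)
    let ?B = "map (\<lambda>i. {i}) [0..<n]"
    have "feasible n s ?B" using sizes unfolding feasible_def by auto
    thus "{sol_cost w B |B. feasible n s B} \<noteq> {}" by blast
  next
    fix x assume "x \<in> {sol_cost w B |B. feasible n s B}"
    then obtain B where x: "x = sol_cost w B" and f: "feasible n s B" by blast
    define U where "U k = (\<Sum>i\<in>B ! k. w i)" for k
    have sub: "\<And>k. k < length B \<Longrightarrow> B ! k \<subseteq> {0..<n}"
      using f unfolding feasible_def by (metis Sup_upper nth_mem)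
    have U: "\<forall>k<length B. 0 \<le> U k \<and> U k \<le> 1"
    proof (intro allI impI conjI)
      fix k assume k: "k < length B"
      have "(\<Sum>i\<in>B ! k. w i) = (\<Sum>i\<in>B ! k. s i)"
        using sub[OF k] eq by (intro sum.cong) auto
      thus "U k \<le> 1" using f k unfolding feasible_def U_def by auto
      show "0 \<le> U k" unfolding U_def using sub[OF k] weights
        by (intro sum_nonneg) (fastforce intro: less_imp_le)
    qed
    have US: "(\<Sum>k<length B. U k) = W"
    proof -
      have fin: "\<And>k. k < length B \<Longrightarrow> finite (B ! k)"
        using sub by (meson finite_atLeastLessThan finite_subset)
      have un: "\<Union> ((!) B ` {..<length B}) = {0..<n}"
      proof -
        have "set B = (!) B ` {..<length B}" by (auto simp: set_conv_nth)
        thus ?thesis using f unfolding feasible_def by simp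
      qed
      have "W = sum w (\<Union> ((!) B ` {..<length B}))" using un by (simp add: W_def)
      also have "\<dots> = (\<Sum>k<length B. U k)" unfolding U_def
        using f fin by (intro sum.UNION_disjoint) (auto simp: feasible_def)
      finally show ?thesis by simp
    qed
    have "x = (\<Sum>k<length B. real (k+1) * U k)" by (simp add: x sol_cost_def U_def)
    thus "W * (W+1)/2 \<le> x" using lb_aux[OF U] US by simp
  qed
  show ?thesis using alg opt unfolding bins_def by linarith
qed

end
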